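(* In the $n$-node line network described in the context, with rates $\mu_0,\ldots,\mu_{n-1}>0$, for every integer $m\ge1$ the stationary $m$th moment age vector exists and equals $$\lim_{t\to\infty}\left[\mathbb{E}[x_1^m(t)]\ \ \mathbb{E}[x_2^m(t)]\ \cdots\ \mathbb{E}[x_n^m(t)]\right]=m!\,[1\ \cdots\ 1]\,\mathbf{U}^m,$$ where $\mathbf{U}$ is the $n\times n$ upper triangular matrix whose row $i$ (indexed $i=0,\ldots,n-1$) has entries $1/\mu_i$ in columns $i,i+1,\ldots,n-1$ and $0$ in columns $0,\ldots,i-1$.
   Context: The line network is the following age process. There are monitors at nodes $1,\ldots,n$ with ages $\mathbf{x}(t)=[x_1(t)\ \cdots\ x_n(t)]$; each age grows at unit rate between events. There are $n$ independent Poisson event processes with rates $\mu_0,\ldots,\mu_{n-1}$. At an event of process $0$ (a fresh update delivered to node 1), $x_1$ is reset to $0$ and all other ages are unchanged. At an event of process $l\in\{1,\ldots,n-1\}$ (node $l$ forwards its current update to node $l+1$), $x_{l+1}$ is reset to $x_l$ and all other ages are unchanged. (Equivalently, this is the age process of a line of preemptive memoryless $\cdot$/M/1/1 servers with service rates $\mu_1,\ldots,\mu_{n-1}$ fed by a rate-$\mu_0$ Poisson source of fresh updates.) *)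

theory Defs
  imports "HOL-Probability.Probability"
begin

text \<open>Sample paths: \<omega> (l, k) is the k-th inter-event time of Poisson process l
  (l = 0..n-1, k = 0,1,...). Nodes are indexed 0..n-1 (index j is node j+1).\<close>

definition event_time :: "(nat \<times> nat \<Rightarrow> real) \<Rightarrow> nat \<Rightarrow> nat \<Rightarrow> real" where
  "event_time \<omega> l k = (\<Sum>i\<le>k. \<omega> (l, i))"

definition num_events :: "(nat \<times> nat \<Rightarrow> real) \<Rightarrow> nat \<Rightarrow> real \<Rightarrow> nat" where
  "num_events \<omega> l t = card {k. event_time \<omega> l k \<le> t}"

definition last_event :: "(nat \<times> nat \<Rightarrow> real) \<Rightarrow> nat \<Rightarrow> real \<Rightarrow> real" where
  "last_event \<omega> l t = event_time \<omega> l (num_events \<omega> l t - 1)"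

text \<open>Age of node index j at time t, starting from initial ages x0.
  Process 0 resets node index 0 to age 0; process l+1 resets node index l+1
  to the current age of node index l.\<close>
fun age :: "(nat \<Rightarrow> real) \<Rightarrow> (nat \<times> nat \<Rightarrow> real) \<Rightarrow> nat \<Rightarrow> real \<Rightarrow> real" where
  "age x0 \<omega> 0 t =
     (if num_events \<omega> 0 t = 0 then x0 0 + t else t - last_event \<omega> 0 t)"
| "age x0 \<omega> (Suc j) t =
     (if num_events \<omega> (Suc j) t = 0 then x0 (Suc j) + t
      else age x0 \<omega> j (last_event \<omega> (Suc j) t) + (t - last_event \<omega> (Suc j) t))"

definition line_space :: "(nat \<Rightarrow> real) \<Rightarrow> nat \<Rightarrow> (nat \<times> nat \<Rightarrow> real) measure" where
  "line_space \<mu> n = PiM ({..<n} \<times> UNIV) (\<lambda>(l, k). density lborel (exponential_density (\<mu> l)))"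

definition Umat :: "(nat \<Rightarrow> real) \<Rightarrow> nat \<Rightarrow> nat \<Rightarrow> nat \<Rightarrow> real" where
  "Umat \<mu> n i j = (if i \<le> j \<and> j < n then 1 / \<mu> i else 0)"

definition mat_mult :: "nat \<Rightarrow> (nat \<Rightarrow> nat \<Rightarrow> real) \<Rightarrow> (nat \<Rightarrow> nat \<Rightarrow> real) \<Rightarrow> nat \<Rightarrow> nat \<Rightarrow> real" where
  "mat_mult n A B i j = (\<Sum>k<n. A i k * B k j)"

fun mat_pow :: "nat \<Rightarrow> (nat \<Rightarrow> nat \<Rightarrow> real) \<Rightarrow> nat \<Rightarrow> nat \<Rightarrow> nat \<Rightarrow> real" where
  "mat_pow n A 0 = (\<lambda>i j. if i = j then 1 else 0)"
| "mat_pow n A (Suc m) = mat_mult n (mat_pow n A m) A"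

end

theory Submission
  imports Defs "HOL-Real_Asymp.Real_Asymp"
begin


lemma card_enn: "enn2real (\<Sum>k. indicator A k :: ennreal) = real (card (A::nat set))"
proof -
  have "(\<Sum>k. indicator A k :: ennreal) = (\<integral>\<^sup>+k. indicator A k \<partial>count_space UNIV)"
    by (simp add: nn_integral_count_space_nat)
  also have "\<dots> = emeasure (count_space UNIV) A" by simp
  finally show ?thesis
    by (cases "finite A") (auto simp: emeasure_count_space)
qed

lemma num_events_real:
  "real (num_events \<omega> l t) = enn2real (\<Sum>k. (if event_time \<omega> l k \<le> t then 1 else 0) :: ennreal)"
proof -
  have "(\<lambda>k. (if event_time \<omega> l k \<le> t then 1 else 0) :: ennreal) = indicator {k. event_time \<omega> l k \<le> t}"
    by (auto simp: indicator_def fun_eq_iff)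
  then show ?thesis unfolding num_events_def by (simp add: card_enn)
qed

lemma event_time_meas[measurable]:
  assumes [measurable]: "\<And>k. (\<lambda>z. \<Omega> z (l,k)) \<in> borel_measurable N"
  shows "(\<lambda>z. event_time (\<Omega> z) l k) \<in> borel_measurable N"
  unfolding event_time_def by measurable

lemma num_events_meas:
  assumes [measurable]: "\<And>k. (\<lambda>z. \<Omega> z (l,k)) \<in> borel_measurable N" "T \<in> borel_measurable N"
  shows "(\<lambda>z. num_events (\<Omega> z) l (T z)) \<in> measurable N (count_space UNIV)"
proof -
  have r: "(\<lambda>z. real (num_events (\<Omega> z) l (T z))) \<in> borel_measurable N"
    unfolding num_events_real by measurable
  show ?thesis
    unfolding measurable_count_space_eq2_countable
  proof safe
    fix a :: nat
    have "(\<lambda>z. num_events (\<Omega> z) l (T z)) -` {a} \<inter> space N = {z\<in>space N. real (num_events (\<Omega> z) l (T z)) = real a}"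
      by auto
    also have "\<dots> \<in> sets N" using r by measurable
    finally show "(\<lambda>z. num_events (\<Omega> z) l (T z)) -` {a} \<inter> space N \<in> sets N" .
  qed auto
qed

lemma last_event_meas:
  assumes [measurable]: "\<And>k. (\<lambda>z. \<Omega> z (l,k)) \<in> borel_measurable N" "T \<in> borel_measurable N"
  shows "(\<lambda>z. last_event (\<Omega> z) l (T z)) \<in> borel_measurable N"
  unfolding last_event_def
proof (rule measurable_compose_countable[where f="\<lambda>i z. event_time (\<Omega> z) l (i - 1)"])
  show "(\<lambda>z. num_events (\<Omega> z) l (T z)) \<in> N \<rightarrow>\<^sub>M count_space UNIV"
    by (rule num_events_meas) (use assms in auto)
qed measurable

lemma age_meas:
  assumes "\<And>l k. l \<le> j \<Longrightarrow> (\<lambda>z. \<Omega> z (l,k)) \<in> borel_measurable N" "T \<in> borel_measurable N"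
  shows "(\<lambda>z. age x0 (\<Omega> z) j (T z)) \<in> borel_measurable N"
  using assms
proof (induction j arbitrary: T)
  case 0
  note [measurable] = 0(1)[of 0, simplified] 0(2)
  have n[measurable]: "(\<lambda>z. num_events (\<Omega> z) 0 (T z)) \<in> measurable N (count_space UNIV)"
    by (rule num_events_meas) measurable
  have [measurable]: "(\<lambda>z. last_event (\<Omega> z) 0 (T z)) \<in> borel_measurable N"
    by (rule last_event_meas) measurable
  show ?case by simp measurable
next
  case (Suc j)
  note [measurable] = Suc(2)[of "Suc j", simplified] Suc(3)
  have n[measurable]: "(\<lambda>z. num_events (\<Omega> z) (Suc j) (T z)) \<in> measurable N (count_space UNIV)"
    by (rule num_events_meas) measurable
  have [measurable]: "(\<lambda>z. last_event (\<Omega> z) (Suc j) (T z)) \<in> borel_measurable N"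
    by (rule last_event_meas) measurable
  have [measurable]: "(\<lambda>z. age x0 (\<Omega> z) j (last_event (\<Omega> z) (Suc j) (T z))) \<in> borel_measurable N"
    by (rule Suc(1)) (use Suc(2) in auto)
  show ?case by simp measurable
qed


lemma num_events_cong: "(\<And>k. \<omega> (l,k) = \<omega>' (l,k)) \<Longrightarrow> num_events \<omega> l t = num_events \<omega>' l t"
  unfolding num_events_def event_time_def by simp

lemma last_event_cong: "(\<And>k. \<omega> (l,k) = \<omega>' (l,k)) \<Longrightarrow> last_event \<omega> l t = last_event \<omega>' l t"
  unfolding last_event_def using num_events_cong[of \<omega> l \<omega>' t] by (simp add: event_time_def)

lemma age_local:
  assumes "\<And>l k. l \<le> j \<Longrightarrow> \<omega> (l,k) = \<omega>' (l,k)"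
  shows "age x0 \<omega> j t = age x0 \<omega>' j t"
  using assms
proof (induction j arbitrary: t)
  case 0
  then show ?case using num_events_cong[of \<omega> 0 \<omega>' t] last_event_cong[of \<omega> 0 \<omega>' t] by simp
next
  case (Suc j)
  have "age x0 \<omega> j s = age x0 \<omega>' j s" for s by (rule Suc.IH) (use Suc.prems in auto)
  then show ?case using num_events_cong[of \<omega> "Suc j" \<omega>' t] last_event_cong[of \<omega> "Suc j" \<omega>' t] Suc.prems
    by simp
qed

lemma event_time_mono:
  assumes "\<And>k. 0 \<le> \<omega> (l,k)" "k \<le> k'"
  shows "event_time \<omega> l k \<le> event_time \<omega> l k'"
  unfolding event_time_def using assms by (intro sum_mono2) auto

lemma event_time_nonneg: "(\<And>k. 0 \<le> \<omega> (l,k)) \<Longrightarrow> 0 \<le> event_time \<omega> l k"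
  unfolding event_time_def by (simp add: sum_nonneg)

lemma last_event_bounds:
  assumes nn: "\<And>k. 0 \<le> \<omega> (l,k)" and ne: "num_events \<omega> l t \<noteq> 0"
  shows "0 \<le> last_event \<omega> l t \<and> last_event \<omega> l t \<le> t"
proof -
  define S where "S = {k. event_time \<omega> l k \<le> t}"
  have fin: "finite S" and nemp: "S \<noteq> {}" using ne unfolding num_events_def S_def[symmetric]
    by (auto intro: card_ge_0_finite)
  define m where "m = Max S"
  have mS: "m \<in> S" using fin nemp unfolding m_def by simp
  have "S = {..m}"
  proof
    show "S \<subseteq> {..m}" using fin unfolding m_def by auto
    show "{..m} \<subseteq> S" using mS event_time_mono[of \<omega> l, OF nn] unfolding S_def
      by (auto intro: order_trans)
  qed
  then have "num_events \<omega> l t = Suc m" unfolding num_events_def S_def[symmetric] by simp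
  then have "last_event \<omega> l t = event_time \<omega> l m" unfolding last_event_def by simp
  then show ?thesis using mS event_time_nonneg[of \<omega> l, OF nn] unfolding S_def by auto
qed

lemma age_bounds:
  assumes "\<And>l k. l \<le> j \<Longrightarrow> 0 \<le> \<omega> (l,k)" "\<And>i. i \<le> j \<Longrightarrow> 0 \<le> x0 i" "0 \<le> t"
  shows "0 \<le> age x0 \<omega> j t \<and> age x0 \<omega> j t \<le> t + (\<Sum>i\<le>j. x0 i)"
  using assms
proof (induction j arbitrary: t)
  case 0
  then show ?case using last_event_bounds[of \<omega> 0 t] by auto
next
  case (Suc j)
  show ?case
  proof (cases "num_events \<omega> (Suc j) t = 0")
    case True
    moreover have "0 \<le> sum x0 {..j}" using Suc.prems by (intro sum_nonneg) auto
    ultimately show ?thesis using Suc.prems by simp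
  next
    case False
    let ?s = "last_event \<omega> (Suc j) t"
    have s: "0 \<le> ?s" "?s \<le> t" using last_event_bounds[of \<omega> "Suc j" t] False Suc.prems by auto
    have "0 \<le> age x0 \<omega> j ?s \<and> age x0 \<omega> j ?s \<le> ?s + (\<Sum>i\<le>j. x0 i)"
      by (rule Suc.IH) (use Suc.prems s in auto)
    then show ?thesis using False s Suc.prems(2)[of "Suc j"] by simp
  qed
qed


definition colsum :: "(nat \<Rightarrow> real) \<Rightarrow> nat \<Rightarrow> nat \<Rightarrow> nat \<Rightarrow> real" where
  "colsum \<mu> n m j = (\<Sum>i<n. mat_pow n (Umat \<mu> n) m i j)"

lemma colsum_0: "j < n \<Longrightarrow> colsum \<mu> n 0 j = 1"
  unfolding colsum_def by (simp add: sum.delta)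

lemma colsum_Suc:
  assumes "j < n"
  shows "colsum \<mu> n (Suc m) j = (\<Sum>k\<le>j. colsum \<mu> n m k / \<mu> k)"
proof -
  have "colsum \<mu> n (Suc m) j = (\<Sum>i<n. \<Sum>k<n. mat_pow n (Umat \<mu> n) m i k * Umat \<mu> n k j)"
    unfolding colsum_def by (simp add: mat_mult_def)
  also have "\<dots> = (\<Sum>k<n. colsum \<mu> n m k * Umat \<mu> n k j)"
    unfolding colsum_def by (subst sum.swap) (simp add: sum_distrib_right)
  also have "\<dots> = (\<Sum>k<n. if k \<le> j then colsum \<mu> n m k / \<mu> k else 0)"
    using assms by (intro sum.cong) (auto simp: Umat_def)
  also have "\<dots> = (\<Sum>k\<in>{..<n} \<inter> {k. k \<le> j}. colsum \<mu> n m k / \<mu> k)"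
    by (simp add: sum.inter_restrict)
  also have "{..<n} \<inter> {k. k \<le> j} = {..j}" using assms by auto
  finally show ?thesis .
qed

lemma colsum_base: "0 < n \<Longrightarrow> colsum \<mu> n m 0 = (1 / \<mu> 0) ^ m"
  by (induction m) (simp_all add: colsum_0 colsum_Suc)

lemma colsum_rec:
  assumes "Suc j < n"
  shows "colsum \<mu> n m (Suc j) = (\<Sum>k\<le>m. (1 / \<mu> (Suc j)) ^ (m - k) * colsum \<mu> n k j)"
proof (induction m)
  case 0
  then show ?case using assms by (simp add: colsum_0)
next
  case (Suc m)
  have "colsum \<mu> n (Suc m) (Suc j) = colsum \<mu> n (Suc m) j + colsum \<mu> n m (Suc j) / \<mu> (Suc j)"
    using assms by (simp add: colsum_Suc)
  also have "\<dots> = colsum \<mu> n (Suc m) j + (\<Sum>k\<le>m. (1 / \<mu> (Suc j)) ^ (Suc m - k) * colsum \<mu> n k j)"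
    unfolding Suc by (simp add: sum_divide_distrib Suc_diff_le field_simps)
  also have "\<dots> = (\<Sum>k\<le>Suc m. (1 / \<mu> (Suc j)) ^ (Suc m - k) * colsum \<mu> n k j)"
    by simp
  finally show ?case .
qed


lemma wgt_nn: "0 < \<mu> \<Longrightarrow> 0 \<le> erlang_density 0 \<mu> a * a ^ p"
  by (auto simp: erlang_density_def)

lemma wgt_integrable: "0 < \<mu> \<Longrightarrow> integrable lborel (\<lambda>a. erlang_density 0 \<mu> a * a ^ p)"
  and wgt_integral: "0 < \<mu> \<Longrightarrow> (\<integral>a. erlang_density 0 \<mu> a * a ^ p \<partial>lborel) = fact p / \<mu> ^ p"
proof -
  assume \<mu>: "0 < \<mu>"
  have nn: "(\<integral>\<^sup>+ x. ennreal (erlang_density 0 \<mu> x * x ^ p) \<partial>lborel) = fact p / \<mu> ^ p"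
    using nn_integral_erlang_ith_moment[OF \<mu>, of 0 p] by simp
  show i: "integrable lborel (\<lambda>a. erlang_density 0 \<mu> a * a ^ p)"
    by (rule integrableI_nonneg) (use nn \<mu> wgt_nn in \<open>auto\<close>)
  have "ennreal (\<integral>a. erlang_density 0 \<mu> a * a ^ p \<partial>lborel) = fact p / \<mu> ^ p"
    using nn_integral_eq_integral[OF i] nn \<mu> wgt_nn by simp
  then show "(\<integral>a. erlang_density 0 \<mu> a * a ^ p \<partial>lborel) = fact p / \<mu> ^ p"
    using \<mu> by (subst (asm) ennreal_inj) (auto intro!: integral_nonneg_AE wgt_nn)
qed

lemma norm_bound_lemma:
  fixes w \<phi> B :: real
  assumes "0 \<le> w" "\<bar>\<phi>\<bar> \<le> B" "0 \<le> B" "a \<le> t"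
  shows "norm (indicator {..t} a * w * \<phi>) \<le> norm (B * w)"
        "norm (indicator {..t} a * w * \<phi>) \<le> B * w"
proof -
  have "norm (indicator {..t} a * w * \<phi>) = w * \<bar>\<phi>\<bar>" using assms by (simp add: abs_mult)
  also have "\<dots> \<le> w * B" by (rule mult_left_mono) (use assms in auto)
  finally show "norm (indicator {..t} a * w * \<phi>) \<le> norm (B * w)"
    "norm (indicator {..t} a * w * \<phi>) \<le> B * w" using assms by (simp_all add: mult.commute)
qed

lemma conv_integrable:
  fixes \<Phi> :: "real \<Rightarrow> real"
  assumes \<mu>: "0 < \<mu>" and [measurable]: "\<Phi> \<in> borel_measurable borel"
    and B: "\<And>s. 0 \<le> s \<Longrightarrow> \<bar>\<Phi> s\<bar> \<le> B"
  shows "integrable lborel (\<lambda>a. indicator {..t} a * (erlang_density 0 \<mu> a * a ^ p) * \<Phi> (t - a))"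
proof (rule Bochner_Integration.integrable_bound)
  show "integrable lborel (\<lambda>a. B * (erlang_density 0 \<mu> a * a ^ p))"
    using wgt_integrable[OF \<mu>] by simp
  have B0: "0 \<le> B" using B[of 0] by simp
  show "AE a in lborel. norm (indicator {..t} a * (erlang_density 0 \<mu> a * a ^ p) * \<Phi> (t - a))
      \<le> norm (B * (erlang_density 0 \<mu> a * a ^ p))"
  proof (rule AE_I2)
    fix a :: real
    show "norm (indicator {..t} a * (erlang_density 0 \<mu> a * a ^ p) * \<Phi> (t - a))
      \<le> norm (B * (erlang_density 0 \<mu> a * a ^ p))"
    proof (cases "0 \<le> a \<and> a \<le> t")
      case True
      then have "\<bar>\<Phi> (t - a)\<bar> \<le> B" by (intro B) auto
      moreover have "0 \<le> erlang_density 0 \<mu> a * a ^ p" by (rule wgt_nn[OF \<mu>])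
      ultimately show ?thesis using True B0 by (intro norm_bound_lemma) auto
    next
      case False
      then show ?thesis by (auto simp: erlang_density_def)
    qed
  qed
qed measurable

lemma conv_limit:
  fixes \<Phi> :: "real \<Rightarrow> real"
  assumes \<mu>: "0 < \<mu>" and [measurable]: "\<Phi> \<in> borel_measurable borel"
    and B: "\<And>s. 0 \<le> s \<Longrightarrow> \<bar>\<Phi> s\<bar> \<le> B" and lim: "(\<Phi> \<longlongrightarrow> D) at_top"
  shows "((\<lambda>t. \<integral>a. indicator {..t} a * (erlang_density 0 \<mu> a * a ^ p) * \<Phi> (t - a) \<partial>lborel)
          \<longlongrightarrow> D * (fact p / \<mu> ^ p)) at_top"
proof -
  have B0: "0 \<le> B" using B[of 0] by simp
  have "((\<lambda>t. \<integral>a. indicator {..t} a * (erlang_density 0 \<mu> a * a ^ p) * \<Phi> (t - a) \<partial>lborel)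
          \<longlongrightarrow> (\<integral>a. (erlang_density 0 \<mu> a * a ^ p) * D \<partial>lborel)) at_top"
  proof (rule integral_dominated_convergence_at_top[where w="\<lambda>a. B * (erlang_density 0 \<mu> a * a ^ p)"])
    show "integrable lborel (\<lambda>a. B * (erlang_density 0 \<mu> a * a ^ p))"
      using wgt_integrable[OF \<mu>] by simp
    show "AE a in lborel. ((\<lambda>t. indicator {..t} a * (erlang_density 0 \<mu> a * a ^ p) * \<Phi> (t - a))
       \<longlongrightarrow> erlang_density 0 \<mu> a * a ^ p * D) at_top"
    proof (rule AE_I2)
      fix a :: real

      show "((\<lambda>t. indicator {..t} a * (erlang_density 0 \<mu> a * a ^ p) * \<Phi> (t - a))
       \<longlongrightarrow> erlang_density 0 \<mu> a * a ^ p * D) at_top"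
      proof (rule Lim_transform_eventually)
        have "filterlim (\<lambda>t. (- a) + t) at_top at_top"
          by (rule filterlim_tendsto_add_at_top[OF tendsto_const filterlim_ident])
        then have "((\<lambda>t. \<Phi> (t - a)) \<longlongrightarrow> D) at_top"
          using filterlim_compose[OF lim] by simp
        then show "((\<lambda>t. (erlang_density 0 \<mu> a * a ^ p) * \<Phi> (t - a))
           \<longlongrightarrow> erlang_density 0 \<mu> a * a ^ p * D) at_top"
          by (intro tendsto_mult tendsto_const)
        show "\<forall>\<^sub>F t in at_top. erlang_density 0 \<mu> a * a ^ p * \<Phi> (t - a) =
           indicator {..t} a * (erlang_density 0 \<mu> a * a ^ p) * \<Phi> (t - a)"
          using eventually_ge_at_top[of a] by eventually_elim simp
      qed
    qed
    show "\<forall>\<^sub>F t in at_top. AE a in lborel.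
        norm (indicator {..t} a * (erlang_density 0 \<mu> a * a ^ p) * \<Phi> (t - a))
          \<le> B * (erlang_density 0 \<mu> a * a ^ p)"
    proof (intro always_eventually allI AE_I2)
      fix t a :: real
      show "norm (indicator {..t} a * (erlang_density 0 \<mu> a * a ^ p) * \<Phi> (t - a))
        \<le> B * (erlang_density 0 \<mu> a * a ^ p)"
      proof (cases "0 \<le> a \<and> a \<le> t")
        case True
        then have "\<bar>\<Phi> (t - a)\<bar> \<le> B" by (intro B) auto
        moreover have "0 \<le> erlang_density 0 \<mu> a * a ^ p" by (rule wgt_nn[OF \<mu>])
        ultimately show ?thesis using True B0 by (intro norm_bound_lemma(2)) auto
      next
        case False
        have "0 \<le> B * (erlang_density 0 \<mu> a * a ^ p)" using B0 wgt_nn[OF \<mu>] by simp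
        then show ?thesis using False by (auto simp: erlang_density_def)
      qed
    qed
  qed measurable
  also have "(\<integral>a. (erlang_density 0 \<mu> a * a ^ p) * D \<partial>lborel) = D * (fact p / \<mu> ^ p)"
    using wgt_integral[OF \<mu>, of p] by simp
  finally show ?thesis .
qed


locale expseq =
  fixes \<mu> :: real
  assumes \<mu>: "0 < \<mu>"
begin

abbreviation "Mx \<equiv> density lborel (exponential_density \<mu>)"
abbreviation "S \<equiv> PiM (UNIV :: nat set) (\<lambda>_. Mx)"

lemma prob_Mx: "prob_space Mx"
  using prob_space_exponential_density[OF \<mu>] .

sublocale S: prob_space S
  by (intro prob_space_PiM prob_Mx)

lemma distr_comp_borel: "distr S borel (\<lambda>x. x i) = Mx"
proof -
  have "distr S borel (\<lambda>x. x i) = distr S Mx (\<lambda>x. x i)"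
    by (rule distr_cong) auto
  also have "\<dots> = Mx" by (rule distr_PiM_component) (auto intro: prob_Mx)
  finally show ?thesis .
qed

lemma distr_comp_lborel: "distr S lborel (\<lambda>x. x i) = Mx"
proof -
  have "distr S lborel (\<lambda>x. x i) = distr S borel (\<lambda>x. x i)"
    by (rule distr_cong) auto
  then show ?thesis using distr_comp_borel by simp
qed

lemma indep_coords: "S.indep_vars (\<lambda>_. borel) (\<lambda>i x. x i) UNIV"
proof (subst S.indep_vars_iff_distr_eq_PiM)
  have "distr S (PiM UNIV (\<lambda>_. borel)) (\<lambda>x. \<lambda>i\<in>UNIV. x i) = distr S (PiM UNIV (\<lambda>_. borel)) (\<lambda>x. x)"
    by (simp add: restrict_UNIV)
  also have "\<dots> = S" by (rule distr_id2) (intro sets_PiM_cong, auto)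
  also have "\<dots> = PiM UNIV (\<lambda>i. distr S borel (\<lambda>x. x i))"
    by (intro PiM_cong) (auto simp: distr_comp_borel)
  finally show "distr S (PiM UNIV (\<lambda>_. borel)) (\<lambda>x. \<lambda>i\<in>UNIV. x i) = PiM UNIV (\<lambda>i. distr S borel (\<lambda>x. x i))" .
qed auto

lemma distributed_comp: "distributed S lborel (\<lambda>x. x i) (exponential_density \<mu>)"
  unfolding distributed_def using distr_comp_lborel by auto

definition E :: "nat \<Rightarrow> (nat \<Rightarrow> real) \<Rightarrow> real" where
  "E k x = (\<Sum>i\<le>k. x i)"

lemma E_meas[measurable]: "E k \<in> borel_measurable S"
  unfolding E_def by measurable

lemma distributed_E: "distributed S lborel (E k) (erlang_density k \<mu>)"
proof -
  have "distributed S lborel (\<lambda>x. \<Sum>i\<in>{..k}. x i) (erlang_density (card {..k} - 1) \<mu>)"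
    by (rule S.exponential_distributed_sum[OF _ _ \<mu> distributed_comp])
       (auto intro: S.indep_vars_subset[OF indep_coords])
  then show ?thesis by (simp add: E_def[abs_def])
qed

lemma indep_E: "S.indep_var borel (\<lambda>x. x (Suc k)) borel (E k)"
proof -
  have "S.indep_var borel (\<lambda>x. x (Suc k)) borel (\<lambda>x. \<Sum>i\<in>{..k}. x i)"
    by (rule S.indep_vars_sum) (auto intro: S.indep_vars_subset[OF indep_coords])
  then show ?thesis by (simp add: E_def[abs_def])
qed

lemma joint_E: "distr S (borel \<Otimes>\<^sub>M borel) (\<lambda>x. (x (Suc k), E k x)) = Mx \<Otimes>\<^sub>M density lborel (erlang_density k \<mu>)"
proof -
  have "distr S (borel \<Otimes>\<^sub>M borel) (\<lambda>x. (x (Suc k), E k x)) = distr S borel (\<lambda>x. x (Suc k)) \<Otimes>\<^sub>M distr S borel (E k)"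
    using indep_E[of k] unfolding S.indep_var_distribution_eq by simp
  also have "distr S borel (E k) = distr S lborel (E k)" by (rule distr_cong) auto
  also have "\<dots> = density lborel (erlang_density k \<mu>)"
    using distributed_E[of k] unfolding distributed_def by simp
  finally show ?thesis by (simp add: distr_comp_borel)
qed

lemma nn_integral_E:
  assumes [measurable]: "g \<in> borel_measurable (borel \<Otimes>\<^sub>M borel)"
  shows "(\<integral>\<^sup>+x. g (x (Suc k), E k x) \<partial>S) =
    (\<integral>\<^sup>+s. ennreal (erlang_density k \<mu> s) * (\<integral>\<^sup>+y. ennreal (exponential_density \<mu> y) * g (y, s) \<partial>lborel) \<partial>lborel)"
proof -
  interpret Er: prob_space "density lborel (erlang_density k \<mu>)"
    by (rule prob_space_erlang_density[OF \<mu>])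
  interpret Mx: prob_space Mx by (rule prob_Mx)
  interpret pair_sigma_finite Mx "density lborel (erlang_density k \<mu>)" ..
  have "(\<integral>\<^sup>+x. g (x (Suc k), E k x) \<partial>S) = (\<integral>\<^sup>+p. g p \<partial>distr S (borel \<Otimes>\<^sub>M borel) (\<lambda>x. (x (Suc k), E k x)))"
    by (subst nn_integral_distr) auto
  also have "\<dots> = (\<integral>\<^sup>+p. g p \<partial>(Mx \<Otimes>\<^sub>M density lborel (erlang_density k \<mu>)))"
    by (simp add: joint_E)
  also have "\<dots> = (\<integral>\<^sup>+s. (\<integral>\<^sup>+y. g (y, s) \<partial>Mx) \<partial>density lborel (erlang_density k \<mu>))"
    by (subst nn_integral_snd[symmetric]) auto
  also have "\<dots> = (\<integral>\<^sup>+s. ennreal (erlang_density k \<mu> s) * (\<integral>\<^sup>+y. ennreal (exponential_density \<mu> y) * g (y, s) \<partial>lborel) \<partial>lborel)"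
    by (subst nn_integral_density) (auto simp: nn_integral_density)
  finally show ?thesis .
qed

end


lemma indicator_sum_infinite: "infinite (A::nat set) \<Longrightarrow> (\<Sum>k. indicator A k :: ennreal) = \<infinity>"
proof -
  assume "infinite A"
  have "(\<Sum>k. indicator A k :: ennreal) = (\<integral>\<^sup>+k. indicator A k \<partial>count_space UNIV)"
    by (simp add: nn_integral_count_space_nat)
  also have "\<dots> = emeasure (count_space UNIV) A" by simp
  finally show ?thesis using \<open>infinite A\<close> by (simp add: emeasure_count_space)
qed

lemma events_set:
  assumes nn: "\<And>k. 0 \<le> \<omega> (l,k)" and fin: "finite {k. event_time \<omega> l k \<le> t}"
    and ne: "{k. event_time \<omega> l k \<le> t} \<noteq> {}"
  shows "{k. event_time \<omega> l k \<le> t} = {..Max {k. event_time \<omega> l k \<le> t}}"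
proof
  let ?S = "{k. event_time \<omega> l k \<le> t}"
  have mS: "Max ?S \<in> ?S" using fin ne by (intro Max_in) auto
  show "?S \<subseteq> {..Max ?S}" using fin by auto
  show "{..Max ?S} \<subseteq> ?S" using mS event_time_mono[of \<omega> l, OF nn]
    by (auto intro: order_trans)
qed

definition lift :: "(nat \<Rightarrow> real) \<Rightarrow> nat \<times> nat \<Rightarrow> real" where
  "lift x = (\<lambda>(_, k). x k)"

lemma lift_apply[simp]: "lift x (l, k) = x k" by (simp add: lift_def)

context expseq
begin

lemma event_time_lift: "event_time (lift x) 0 k = E k x"
  by (simp add: event_time_def E_def)

lemma erlang_suminf: "(\<Sum>k. ennreal (erlang_density k \<mu> s)) = ennreal (if s < 0 then 0 else \<mu>)"
proof (cases "s < 0")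
  case True then show ?thesis by (simp add: erlang_density_def)
next
  case False
  have "(\<lambda>k. (\<mu> * exp (- \<mu> * s)) * ((\<mu> * s) ^ k /\<^sub>R fact k)) sums ((\<mu> * exp (- \<mu> * s)) * exp (\<mu> * s))"
    by (intro sums_mult exp_converges)
  also have "(\<mu> * exp (- \<mu> * s)) * exp (\<mu> * s) = \<mu>" by (simp add: exp_minus field_simps)
  also have "(\<lambda>k. (\<mu> * exp (- \<mu> * s)) * ((\<mu> * s) ^ k /\<^sub>R fact k)) = (\<lambda>k. erlang_density k \<mu> s)"
    using False by (auto simp: erlang_density_def fun_eq_iff field_simps power_mult_distrib)
  finally have "(\<lambda>k. erlang_density k \<mu> s) sums \<mu>" .
  then show ?thesis using False \<mu>
    by (subst suminf_ennreal2) (auto simp: sums_iff intro: erlang_density_nonneg less_imp_le)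
qed

lemma exp_tail:
  assumes "0 \<le> a"
  shows "(\<integral>\<^sup>+y. ennreal (exponential_density \<mu> y) * indicator {a<..} y \<partial>lborel) = ennreal (exp (- \<mu> * a))"
proof -
  interpret Mx: prob_space Mx by (rule prob_Mx)
  have D: "distributed Mx lborel (\<lambda>x. x) (exponential_density \<mu>)"
    unfolding distributed_def by (auto simp: distr_id2)
  have "(\<integral>\<^sup>+y. ennreal (exponential_density \<mu> y) * indicator {a<..} y \<partial>lborel) = emeasure Mx {a<..}"
    by (simp add: emeasure_density)
  also have "\<dots> = ennreal (Mx.prob {x \<in> space Mx. a < x})"
    by (simp add: Mx.emeasure_eq_measure greaterThan_def)
  also have "Mx.prob {x \<in> space Mx. a < x} = exp (- a * \<mu>)"
    by (rule Mx.exponential_distributedD_gt[OF D assms \<mu>])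
  finally show ?thesis by (simp add: mult.commute)
qed

end


context expseq
begin

lemma E_Suc: "E (Suc k) x = E k x + x (Suc k)"
  by (simp add: E_def)

lemma E_0: "E 0 x = x 0"
  by (simp add: E_def)

lemma E_mono: "(\<And>i. 0 \<le> x i) \<Longrightarrow> k \<le> k' \<Longrightarrow> E k x \<le> E k' x"
  using event_time_mono[of "lift x" 0 k k'] by (simp add: event_time_lift)

lemma decomp:
  assumes nn: "\<And>i. 0 \<le> x i" and fin: "finite {k. E k x \<le> t}"
  shows "(if num_events (lift x) 0 t = 0 then c else h (t - last_event (lift x) 0 t)) =
    (if t < x 0 then c else 0) + (\<Sum>k. if E k x \<le> t \<and> t < E k x + x (Suc k) then h (t - E k x) else (0::ennreal))"
proof -
  let ?S = "{k. E k x \<le> t}"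
  have S_eq: "{k. event_time (lift x) 0 k \<le> t} = ?S" by (simp add: event_time_lift)
  have nn': "\<And>k. 0 \<le> lift x (0, k)" using nn by simp
  show ?thesis
  proof (cases "?S = {}")
    case True
    then have "num_events (lift x) 0 t = 0" unfolding num_events_def S_eq by simp
    moreover have "t < x 0" using True E_0[of x] by (metis (mono_tags, lifting) empty_Collect_eq not_le)
    moreover have "(\<lambda>k. if E k x \<le> t \<and> t < E k x + x (Suc k) then h (t - E k x) else (0::ennreal)) = (\<lambda>_. 0)"
      using True by auto
    ultimately show ?thesis by simp
  next
    case False
    define m where "m = Max ?S"
    have Seq: "?S = {..m}" using events_set[of "lift x" 0 t, OF nn'] fin False unfolding S_eq m_def by simp
    have "num_events (lift x) 0 t = Suc m" unfolding num_events_def S_eq Seq by simp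
    then have ne: "num_events (lift x) 0 t \<noteq> 0" and le: "last_event (lift x) 0 t = E m x"
      by (simp_all add: last_event_def event_time_lift)
    have "0 \<in> ?S" using Seq by auto
    then have x0: "\<not> t < x 0" by (simp add: E_0)
    have summ: "(\<lambda>k. if E k x \<le> t \<and> t < E k x + x (Suc k) then h (t - E k x) else (0::ennreal)) =
       (\<lambda>k. if k = m then h (t - E m x) else 0)"
    proof
      fix k
      have "(E k x \<le> t \<and> t < E k x + x (Suc k)) \<longleftrightarrow> (k \<in> ?S \<and> Suc k \<notin> ?S)"
        by (simp add: E_Suc not_le)
      also have "\<dots> \<longleftrightarrow> k = m" unfolding Seq by auto
      finally show "(if E k x \<le> t \<and> t < E k x + x (Suc k) then h (t - E k x) else (0::ennreal)) =
       (if k = m then h (t - E m x) else 0)" by auto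
    qed
    have "(\<Sum>k. if k = m then h (t - E m x) else (0::ennreal)) = h (t - E m x)"
      by (subst suminf_finite[of "{m}"]) auto
    then show ?thesis using ne le x0 summ by simp
  qed
qed

lemma AE_nonneg: "AE x in S. \<forall>i. 0 \<le> x i"
proof -
  interpret Mx: prob_space Mx by (rule prob_Mx)
  interpret product_prob_space "\<lambda>_::nat. Mx" UNIV
    by unfold_locales
  have "AE y in Mx. 0 \<le> y"
    by (subst AE_density) (auto simp: erlang_density_def)
  then have "\<And>i. AE x in S. 0 \<le> x i" by (intro AE_component) auto
  then show ?thesis by (simp add: AE_all_countable)
qed

lemma nn_integral_E_only:
  assumes [measurable]: "g \<in> borel_measurable borel"
  shows "(\<integral>\<^sup>+x. g (E k x) \<partial>S) = (\<integral>\<^sup>+s. ennreal (erlang_density k \<mu> s) * g s \<partial>lborel)"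
  using distributed_nn_integral[OF distributed_E[of k], of g] by simp

lemma AE_finite: "AE x in S. finite {k. E k x \<le> t}"
proof -
  have [measurable]: "(\<lambda>x. \<Sum>k. indicator {..t} (E k x) :: ennreal) \<in> borel_measurable S"
    by measurable
  have "(\<integral>\<^sup>+x. (\<Sum>k. indicator {..t} (E k x)) \<partial>S) = (\<Sum>k. \<integral>\<^sup>+x. indicator {..t} (E k x) \<partial>S)"
    by (rule nn_integral_suminf) measurable
  also have "\<dots> = (\<Sum>k. \<integral>\<^sup>+s. ennreal (erlang_density k \<mu> s) * indicator {..t} s \<partial>lborel)"
    by (subst nn_integral_E_only) auto
  also have "\<dots> = (\<integral>\<^sup>+s. (\<Sum>k. ennreal (erlang_density k \<mu> s)) * indicator {..t} s \<partial>lborel)"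
    by (subst nn_integral_suminf[symmetric]) auto
  also have "\<dots> = (\<integral>\<^sup>+s. ennreal \<mu> * indicator {0..t} s \<partial>lborel)"
    by (intro nn_integral_cong) (auto simp: erlang_suminf split: split_indicator)
  also have "\<dots> < \<infinity>"
    by (subst nn_integral_cmult) (auto simp: ennreal_mult_less_top emeasure_lborel_Icc_eq)
  finally have "AE x in S. (\<Sum>k. indicator {..t} (E k x) :: ennreal) \<noteq> \<infinity>"
    by (intro nn_integral_PInf_AE) auto
  then show ?thesis
  proof eventually_elim
    case (elim x)
    have "(\<lambda>k. indicator {..t} (E k x) :: ennreal) = indicator {k. E k x \<le> t}"
      by (auto simp: fun_eq_iff split: split_indicator)
    then show ?case using elim indicator_sum_infinite by fastforce
  qed
qed

end


context expseq
begin

lemma renewal: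
  assumes t: "0 \<le> t" and [measurable]: "h \<in> borel_measurable borel"
  shows "(\<integral>\<^sup>+x. (if num_events (lift x) 0 t = 0 then c else h (t - last_event (lift x) 0 t)) \<partial>S)
    = ennreal (exp (- \<mu> * t)) * c + (\<integral>\<^sup>+a. ennreal (indicator {..t} a * erlang_density 0 \<mu> a) * h a \<partial>lborel)"
proof -
  define f where "f k x = (if E k x \<le> t \<and> t < E k x + x (Suc k) then h (t - E k x) else (0::ennreal))" for k x
  have [measurable]: "f k \<in> borel_measurable S" for k unfolding f_def by measurable
  have "(\<integral>\<^sup>+x. (if num_events (lift x) 0 t = 0 then c else h (t - last_event (lift x) 0 t)) \<partial>S)
     = (\<integral>\<^sup>+x. (if t < x 0 then c else 0) + (\<Sum>k. f k x) \<partial>S)"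
    apply (rule nn_integral_cong_AE)
    using AE_nonneg AE_finite[of t]
    apply eventually_elim
    apply (subst decomp)
    apply (auto simp: f_def)
    done
  also have "\<dots> = (\<integral>\<^sup>+x. (if t < x 0 then c else 0) \<partial>S) + (\<integral>\<^sup>+x. (\<Sum>k. f k x) \<partial>S)"
    by (rule nn_integral_add) auto
  also have "(\<integral>\<^sup>+x. (if t < x 0 then c else 0) \<partial>S) = ennreal (exp (- \<mu> * t)) * c"
  proof -
    have "(\<integral>\<^sup>+x. (if t < x 0 then c else 0) \<partial>S) = (\<integral>\<^sup>+y. ennreal (exponential_density \<mu> y) * (if t < y then c else 0) \<partial>lborel)"
      using distributed_nn_integral[OF distributed_comp[of 0], of "\<lambda>y. if t < y then c else 0"] by simp
    also have "\<dots> = (\<integral>\<^sup>+y. (ennreal (exponential_density \<mu> y) * indicator {t<..} y) * c \<partial>lborel)"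
      by (intro nn_integral_cong) (auto split: split_indicator)
    also have "\<dots> = (\<integral>\<^sup>+y. ennreal (exponential_density \<mu> y) * indicator {t<..} y \<partial>lborel) * c"
      by (rule nn_integral_multc) auto
    also have "\<dots> = ennreal (exp (- \<mu> * t)) * c" by (simp add: exp_tail t)
    finally show ?thesis .
  qed
  also have "(\<integral>\<^sup>+x. (\<Sum>k. f k x) \<partial>S) = (\<Sum>k. \<integral>\<^sup>+x. f k x \<partial>S)"
    by (rule nn_integral_suminf) auto
  also have "(\<lambda>k. \<integral>\<^sup>+x. f k x \<partial>S) = (\<lambda>k. \<integral>\<^sup>+s. ennreal (erlang_density k \<mu> s) *
      (if s \<le> t then ennreal (exp (- \<mu> * (t - s))) * h (t - s) else 0) \<partial>lborel)"
  proof
    fix k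
    define g where "g p = (if snd p \<le> t \<and> t < snd p + fst p then h (t - snd p) else (0::ennreal))" for p :: "real \<times> real"
    have [measurable]: "g \<in> borel_measurable (borel \<Otimes>\<^sub>M borel)" unfolding g_def by measurable
    have "(\<integral>\<^sup>+x. f k x \<partial>S) = (\<integral>\<^sup>+x. g (x (Suc k), E k x) \<partial>S)"
      unfolding f_def g_def by (intro nn_integral_cong) simp
    also have "\<dots> = (\<integral>\<^sup>+s. ennreal (erlang_density k \<mu> s) * (\<integral>\<^sup>+y. ennreal (exponential_density \<mu> y) * g (y, s) \<partial>lborel) \<partial>lborel)"
      by (rule nn_integral_E) measurable
    also have "\<dots> = (\<integral>\<^sup>+s. ennreal (erlang_density k \<mu> s) *
      (if s \<le> t then ennreal (exp (- \<mu> * (t - s))) * h (t - s) else 0) \<partial>lborel)"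
    proof (intro nn_integral_cong arg_cong2[where f="(*)"] refl)
      fix s :: real
      show "(\<integral>\<^sup>+y. ennreal (exponential_density \<mu> y) * g (y, s) \<partial>lborel) =
          (if s \<le> t then ennreal (exp (- \<mu> * (t - s))) * h (t - s) else 0)"
      proof (cases "s \<le> t")
        case True
        have "(\<integral>\<^sup>+y. ennreal (exponential_density \<mu> y) * g (y, s) \<partial>lborel) =
          (\<integral>\<^sup>+y. (ennreal (exponential_density \<mu> y) * indicator {t - s<..} y) * h (t - s) \<partial>lborel)"
          using True by (intro nn_integral_cong) (auto simp: g_def split: split_indicator)
        also have "\<dots> = (\<integral>\<^sup>+y. ennreal (exponential_density \<mu> y) * indicator {t - s<..} y \<partial>lborel) * h (t - s)"
          by (rule nn_integral_multc) auto
        also have "\<dots> = ennreal (exp (- \<mu> * (t - s))) * h (t - s)"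
          using True by (simp add: exp_tail)
        finally show ?thesis using True by simp
      next
        case False
        then show ?thesis by (simp add: g_def)
      qed
    qed
    finally show "(\<integral>\<^sup>+x. f k x \<partial>S) = (\<integral>\<^sup>+s. ennreal (erlang_density k \<mu> s) *
      (if s \<le> t then ennreal (exp (- \<mu> * (t - s))) * h (t - s) else 0) \<partial>lborel)" .
  qed
  also have "(\<Sum>k. \<integral>\<^sup>+s. ennreal (erlang_density k \<mu> s) *
      (if s \<le> t then ennreal (exp (- \<mu> * (t - s))) * h (t - s) else 0) \<partial>lborel) =
    (\<integral>\<^sup>+s. (\<Sum>k. ennreal (erlang_density k \<mu> s)) *
      (if s \<le> t then ennreal (exp (- \<mu> * (t - s))) * h (t - s) else 0) \<partial>lborel)"
    by (subst nn_integral_suminf[symmetric]) auto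
  also have "\<dots> = (\<integral>\<^sup>+s. ennreal (if s < 0 then 0 else \<mu>) *
      (if s \<le> t then ennreal (exp (- \<mu> * (t - s))) * h (t - s) else 0) \<partial>lborel)"
    by (simp add: erlang_suminf)
  also have "\<dots> = ennreal \<bar>- 1 :: real\<bar> * (\<integral>\<^sup>+a. ennreal (if t + (- 1) * a < 0 then 0 else \<mu>) *
      (if t + (- 1) * a \<le> t then ennreal (exp (- \<mu> * (t - (t + (- 1) * a)))) * h (t - (t + (- 1) * a)) else 0) \<partial>lborel)"
    by (rule nn_integral_real_affine[where c="-1" and t=t]) auto
  also have "\<dots> = (\<integral>\<^sup>+a. ennreal (indicator {..t} a * erlang_density 0 \<mu> a) * h a \<partial>lborel)"
  proof -
    have "ennreal (if t + (- 1) * a < 0 then 0 else \<mu>) *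
      (if t + (- 1) * a \<le> t then ennreal (exp (- \<mu> * (t - (t + (- 1) * a)))) * h (t - (t + (- 1) * a)) else 0)
      = ennreal (indicator {..t} a * erlang_density 0 \<mu> a) * h a" for a
    proof (cases "0 \<le> a \<and> a \<le> t")
      case True
      then show ?thesis using \<mu>
        by (simp add: erlang_density_def ennreal_mult' mult.assoc mult.commute[of "exp _"])
    next
      case False
      then show ?thesis by (auto simp: erlang_density_def)
    qed
    then show ?thesis by simp
  qed
  finally show ?thesis .
qed

end


lemma split_PiM:
  assumes M: "\<And>i. i \<in> I \<Longrightarrow> prob_space (M i)" and I: "I \<noteq> {}"
    and AB: "A \<subseteq> I" "B \<subseteq> I" "A \<inter> B = {}"
  shows "distr (PiM I M) (PiM A M \<Otimes>\<^sub>M PiM B M) (\<lambda>\<omega>. (restrict \<omega> A, restrict \<omega> B)) = PiM A M \<Otimes>\<^sub>M PiM B M"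
proof -
  interpret P: prob_space "PiM I M" by (intro prob_space_PiM M)
  have ind: "P.indep_vars M (\<lambda>i \<omega>. \<omega> i) I"
  proof (subst P.indep_vars_iff_distr_eq_PiM')
    have "distr (PiM I M) (PiM I M) (\<lambda>x. \<lambda>i\<in>I. x i) = distr (PiM I M) (PiM I M) (\<lambda>x. x)"
      by (rule distr_cong) (auto simp: space_PiM PiE_def extensional_restrict)
    also have "\<dots> = PiM I M" by (rule distr_id2) simp
    also have "\<dots> = PiM I (\<lambda>i. distr (PiM I M) (M i) (\<lambda>\<omega>. \<omega> i))"
      by (intro PiM_cong refl distr_PiM_component[symmetric] M) auto
    finally show "distr (PiM I M) (PiM I M) (\<lambda>x. \<lambda>i\<in>I. x i) = PiM I (\<lambda>i. distr (PiM I M) (M i) (\<lambda>\<omega>. \<omega> i))" .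
  qed (use I in auto)
  have "P.indep_var (PiM A M) (\<lambda>\<omega>. restrict (\<lambda>i. \<omega> i) A) (PiM B M) (\<lambda>\<omega>. restrict (\<lambda>i. \<omega> i) B)"
    by (rule P.indep_var_restrict[OF ind]) (use AB in auto)
  then have "distr (PiM I M) (PiM A M) (\<lambda>\<omega>. restrict \<omega> A) \<Otimes>\<^sub>M distr (PiM I M) (PiM B M) (\<lambda>\<omega>. restrict \<omega> B) =
      distr (PiM I M) (PiM A M \<Otimes>\<^sub>M PiM B M) (\<lambda>\<omega>. (restrict \<omega> A, restrict \<omega> B))"
    unfolding P.indep_var_distribution_eq by simp
  moreover have "distr (PiM I M) (PiM A M) (\<lambda>\<omega>. restrict \<omega> A) = PiM A M"
    if "A \<subseteq> I" for A
    using distr_PiM_reindex[of I M id A, OF M] that by (auto simp: restrict_def Pi_iff)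
  ultimately show ?thesis using AB by simp
qed

locale line =
  fixes \<mu> :: "nat \<Rightarrow> real" and n :: nat and x0 :: "nat \<Rightarrow> real"
  assumes \<mu>pos: "\<And>l. l < n \<Longrightarrow> 0 < \<mu> l" and x0nn: "\<And>j. j < n \<Longrightarrow> 0 \<le> x0 j"
begin

abbreviation "Mi \<equiv> (\<lambda>(l, k). density lborel (exponential_density (\<mu> l))) :: nat \<times> nat \<Rightarrow> real measure"
abbreviation "Ix \<equiv> {..<n} \<times> (UNIV :: nat set)"
abbreviation "P \<equiv> line_space \<mu> n"

lemma P_def: "P = PiM Ix Mi" by (simp add: line_space_def)

lemma prob_Mi: "i \<in> Ix \<Longrightarrow> prob_space (Mi i)"
  by (auto intro!: prob_space_exponential_density \<mu>pos)

sublocale P: prob_space P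
  unfolding P_def by (intro prob_space_PiM prob_Mi)

lemma coord_meas[measurable]: "l < n \<Longrightarrow> (\<lambda>\<omega>. \<omega> (l, k)) \<in> borel_measurable P"
proof -
  assume "l < n"
  then have "(\<lambda>\<omega>. \<omega> (l, k)) \<in> measurable (PiM Ix Mi) (Mi (l, k))"
    by (intro measurable_component_singleton) auto
  moreover have "sets (Mi (l, k)) = sets borel" by simp
  ultimately show ?thesis unfolding P_def using measurable_cong_sets by blast
qed

end


lemma seq_distr:
  assumes M: "\<And>i. i \<in> K \<Longrightarrow> prob_space (M i)" and K: "{l} \<times> UNIV \<subseteq> K"
  shows "distr (PiM K M) (PiM UNIV (\<lambda>k. M (l, k))) (\<lambda>\<omega> k. \<omega> (l, k)) = PiM UNIV (\<lambda>k. M (l, k))"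
proof -
  have "inj_on (Pair l) UNIV" by (auto simp: inj_on_def)
  moreover have "Pair l \<in> UNIV \<rightarrow> K" using K by auto
  ultimately show ?thesis using distr_PiM_reindex[of K M "Pair l" UNIV, OF M] by (simp add: restrict_UNIV)
qed

lemma comp_meas[measurable]: "(\<lambda>x. x k) \<in> borel_measurable (PiM UNIV (\<lambda>_. density lborel f))"
proof -
  have "(\<lambda>x. x k) \<in> measurable (PiM UNIV (\<lambda>_. density lborel f)) (density lborel f)"
    by (intro measurable_component_singleton) auto
  moreover have "sets (density lborel f) = sets borel" by simp
  ultimately show ?thesis using measurable_cong_sets by fastforce
qed

lemma lift_meas[measurable]: "(\<lambda>x. lift x (l, k)) \<in> borel_measurable (PiM UNIV (\<lambda>_. density lborel f))"
  by (simp add: comp_meas)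

context line
begin

lemma seqP: "l < n \<Longrightarrow> distr P (expseq.S (\<mu> l)) (\<lambda>\<omega> k. \<omega> (l, k)) = expseq.S (\<mu> l)"
  unfolding P_def using seq_distr[of Ix Mi l] prob_Mi by auto

lemma restrP: "B \<subseteq> Ix \<Longrightarrow> distr P (PiM B Mi) (\<lambda>\<omega>. restrict \<omega> B) = PiM B Mi"
  unfolding P_def using distr_PiM_reindex[of Ix Mi id B, OF prob_Mi] by (auto simp: restrict_def Pi_iff)

lemma AE_P_nonneg: "AE \<omega> in P. \<forall>l<n. \<forall>k. 0 \<le> \<omega> (l, k)"
proof -
  have "AE \<omega> in P. 0 \<le> \<omega> (l, k)" if "l < n" for l k
  proof -
    have "AE y in density lborel (exponential_density (\<mu> l)). 0 \<le> y"
      by (subst AE_density) (auto simp: erlang_density_def)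
    then have "AE y in Mi (l, k). 0 \<le> y" by (subst case_prod_conv)
    then show ?thesis unfolding P_def using that
      by (intro AE_PiM_component[where P="\<lambda>y. 0 \<le> y", OF prob_Mi]) auto
  qed
  then show ?thesis by (simp add: AE_all_countable AE_ball_countable)
qed

lemma num_events_seq: "num_events \<omega> l t = num_events (lift (\<lambda>k. \<omega> (l, k))) 0 t"
  by (simp add: num_events_def event_time_def)

lemma last_event_seq: "last_event \<omega> l t = last_event (lift (\<lambda>k. \<omega> (l, k))) 0 t"
  by (simp add: last_event_def num_events_def event_time_def)

lemma step0:
  assumes n: "0 < n" and t: "0 \<le> t" and [measurable]: "F \<in> borel_measurable borel"
  shows "(\<integral>\<^sup>+\<omega>. F (age x0 \<omega> 0 t) \<partial>P) = ennreal (exp (- \<mu> 0 * t)) * F (x0 0 + t)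
    + (\<integral>\<^sup>+a. ennreal (indicator {..t} a * erlang_density 0 (\<mu> 0) a) * F a \<partial>lborel)"
proof -
  interpret E: expseq "\<mu> 0" using \<mu>pos[OF n] by unfold_locales
  define G where "G x = (if num_events (lift x) 0 t = 0 then F (x0 0 + t) else F (t - last_event (lift x) 0 t))" for x
  have [measurable]: "(\<lambda>x. num_events (lift x) 0 t) \<in> measurable E.S (count_space UNIV)"
    by (rule num_events_meas) (auto simp: comp_meas)
  have [measurable]: "(\<lambda>x. last_event (lift x) 0 t) \<in> borel_measurable E.S"
    by (rule last_event_meas) (auto simp: comp_meas)
  have Gm[measurable]: "G \<in> borel_measurable E.S" unfolding G_def by measurable
  have sm[measurable]: "(\<lambda>\<omega> k. \<omega> (0, k)) \<in> measurable P E.S"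
  proof -
    have "(\<lambda>\<omega> k. \<omega> (0, k)) \<in> measurable P (PiM UNIV (\<lambda>_. borel))"
      using n by (intro measurable_PiM_single') auto
    moreover have "sets (PiM UNIV (\<lambda>_::nat. borel)) = sets E.S" by (intro sets_PiM_cong) auto
    ultimately show ?thesis using measurable_cong_sets by fastforce
  qed
  have "(\<integral>\<^sup>+\<omega>. F (age x0 \<omega> 0 t) \<partial>P) = (\<integral>\<^sup>+\<omega>. G (\<lambda>k. \<omega> (0, k)) \<partial>P)"
  proof (intro nn_integral_cong)
    fix \<omega> :: "nat \<times> nat \<Rightarrow> real"
    show "F (age x0 \<omega> 0 t) = G (\<lambda>k. \<omega> (0, k))"
      unfolding age.simps G_def num_events_seq[of \<omega> 0 t] last_event_seq[of \<omega> 0 t] by simp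
  qed
  also have "\<dots> = (\<integral>\<^sup>+x. G x \<partial>distr P E.S (\<lambda>\<omega> k. \<omega> (0, k)))"
    by (rule nn_integral_distr[symmetric]) auto
  also have "\<dots> = (\<integral>\<^sup>+x. G x \<partial>E.S)" using seqP[OF n] by simp
  also have "\<dots> = ennreal (exp (- \<mu> 0 * t)) * F (x0 0 + t)
    + (\<integral>\<^sup>+a. ennreal (indicator {..t} a * erlang_density 0 (\<mu> 0) a) * F a \<partial>lborel)"
    unfolding G_def by (rule E.renewal[OF t]) auto
  finally show ?thesis .
qed

end


context line
begin

lemma PiM_coord:
  assumes "(l, k) \<in> K"
  shows "(\<lambda>\<omega>. \<omega> (l, k)) \<in> borel_measurable (PiM K Mi)"
proof -
  have "(\<lambda>\<omega>. \<omega> (l, k)) \<in> measurable (PiM K Mi) (Mi (l, k))"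
    using assms by (intro measurable_component_singleton)
  moreover have "sets (Mi (l, k)) = sets borel" by simp
  ultimately show ?thesis using measurable_cong_sets by fastforce
qed

lemma stepSuc:
  assumes j: "Suc j < n" and t: "0 \<le> t" and [measurable]: "F \<in> borel_measurable borel"
  shows "(\<integral>\<^sup>+\<omega>. F (age x0 \<omega> (Suc j) t) \<partial>P) = ennreal (exp (- \<mu> (Suc j) * t)) * F (x0 (Suc j) + t)
    + (\<integral>\<^sup>+a. ennreal (indicator {..t} a * erlang_density 0 (\<mu> (Suc j)) a) *
         (\<integral>\<^sup>+\<omega>. F (age x0 \<omega> j (t - a) + a) \<partial>P) \<partial>lborel)"
proof -
  interpret E: expseq "\<mu> (Suc j)" using \<mu>pos[OF j] by unfold_locales
  define A where "A = {Suc j} \<times> (UNIV::nat set)"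
  define B where "B = {..j} \<times> (UNIV::nat set)"
  have AB: "A \<subseteq> Ix" "B \<subseteq> Ix" "A \<inter> B = {}" using j by (auto simp: A_def B_def)
  interpret PA: prob_space "PiM A Mi" using AB by (intro prob_space_PiM prob_Mi) auto
  interpret PB: prob_space "PiM B Mi" using AB by (intro prob_space_PiM prob_Mi) auto
  define hh where "hh a = (\<integral>\<^sup>+\<omega>. F (age x0 \<omega> j (t - a) + a) \<partial>P)" for a
  have "(\<lambda>p. age x0 (snd p) j (t - fst p)) \<in> borel_measurable (borel \<Otimes>\<^sub>M P)"
  proof (rule age_meas)
    fix l k assume "l \<le> j"
    then have [measurable]: "(\<lambda>\<omega>. \<omega> (l, k)) \<in> borel_measurable P" using j by (intro coord_meas) auto
    show "(\<lambda>z. snd z (l, k)) \<in> borel_measurable (borel \<Otimes>\<^sub>M P)" by measurable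
  qed measurable
  then have [measurable]: "(\<lambda>(a, \<omega>). F (age x0 \<omega> j (t - a) + a)) \<in> borel_measurable (borel \<Otimes>\<^sub>M P)"
    by (simp add: case_prod_beta') measurable
  have hh_meas[measurable]: "hh \<in> borel_measurable borel"
    unfolding hh_def by measurable
  define G where "G x = (if num_events (lift x) 0 t = 0 then F (x0 (Suc j) + t) else hh (t - last_event (lift x) 0 t))" for x
  have [measurable]: "(\<lambda>x. num_events (lift x) 0 t) \<in> measurable E.S (count_space UNIV)"
    by (rule num_events_meas) (auto simp: comp_meas)
  have [measurable]: "(\<lambda>x. last_event (lift x) 0 t) \<in> borel_measurable E.S"
    by (rule last_event_meas) (auto simp: comp_meas)
  have Gm[measurable]: "G \<in> borel_measurable E.S" unfolding G_def by measurable
  define L where "L y = last_event (lift (\<lambda>k. y (Suc j, k))) 0 t" for y :: "nat \<times> nat \<Rightarrow> real"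
  define H where "H p = (if num_events (lift (\<lambda>k. fst p (Suc j, k))) 0 t = 0 then F (x0 (Suc j) + t)
      else F (age x0 (snd p) j (L (fst p)) + (t - L (fst p))))" for p
  have cA[measurable]: "(\<lambda>p. fst p (Suc j, k)) \<in> borel_measurable (PiM A Mi \<Otimes>\<^sub>M PiM B Mi)" for k
  proof -
    have [measurable]: "(\<lambda>\<omega>. \<omega> (Suc j, k)) \<in> borel_measurable (PiM A Mi)"
      by (rule PiM_coord) (auto simp: A_def)
    show ?thesis by measurable
  qed
  have cB: "(\<lambda>p. snd p (l, k)) \<in> borel_measurable (PiM A Mi \<Otimes>\<^sub>M PiM B Mi)" if "l \<le> j" for l k
  proof -
    have [measurable]: "(\<lambda>\<omega>. \<omega> (l, k)) \<in> borel_measurable (PiM B Mi)"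
      by (rule PiM_coord) (use that in \<open>auto simp: B_def\<close>)
    show ?thesis by measurable
  qed
  have [measurable]: "(\<lambda>p. num_events (lift (\<lambda>k. fst p (Suc j, k))) 0 t) \<in> measurable (PiM A Mi \<Otimes>\<^sub>M PiM B Mi) (count_space UNIV)"
    by (rule num_events_meas) auto
  have [measurable]: "(\<lambda>p. L (fst p)) \<in> borel_measurable (PiM A Mi \<Otimes>\<^sub>M PiM B Mi)"
    unfolding L_def by (rule last_event_meas) auto
  have [measurable]: "(\<lambda>p. age x0 (snd p) j (L (fst p))) \<in> borel_measurable (PiM A Mi \<Otimes>\<^sub>M PiM B Mi)"
    by (rule age_meas) (auto intro: cB)
  have Hm[measurable]: "H \<in> borel_measurable (PiM A Mi \<Otimes>\<^sub>M PiM B Mi)"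
    unfolding H_def by measurable
  have key1: "F (age x0 \<omega> (Suc j) t) = H (restrict \<omega> A, restrict \<omega> B)" for \<omega>
  proof -
    have 1: "(\<lambda>k. restrict \<omega> A (Suc j, k)) = (\<lambda>k. \<omega> (Suc j, k))" by (auto simp: A_def)
    have 2: "age x0 (restrict \<omega> B) j s = age x0 \<omega> j s" for s
      by (rule age_local) (auto simp: B_def)
    show ?thesis
      unfolding age.simps H_def L_def fst_conv snd_conv 1 2
        num_events_seq[of \<omega> "Suc j" t] last_event_seq[of \<omega> "Suc j" t] by simp
  qed
  have rm[measurable]: "(\<lambda>\<omega>. (restrict \<omega> A, restrict \<omega> B)) \<in> measurable P (PiM A Mi \<Otimes>\<^sub>M PiM B Mi)"
    unfolding P_def using AB by (intro measurable_Pair measurable_restrict_subset)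
  have "(\<integral>\<^sup>+\<omega>. F (age x0 \<omega> (Suc j) t) \<partial>P) = (\<integral>\<^sup>+\<omega>. H (restrict \<omega> A, restrict \<omega> B) \<partial>P)"
    by (rule nn_integral_cong) (rule key1)
  also have "\<dots> = (\<integral>\<^sup>+p. H p \<partial>distr P (PiM A Mi \<Otimes>\<^sub>M PiM B Mi) (\<lambda>\<omega>. (restrict \<omega> A, restrict \<omega> B)))"
    by (rule nn_integral_distr[symmetric]) auto
  also have "distr P (PiM A Mi \<Otimes>\<^sub>M PiM B Mi) (\<lambda>\<omega>. (restrict \<omega> A, restrict \<omega> B)) = PiM A Mi \<Otimes>\<^sub>M PiM B Mi"
    unfolding P_def using AB j by (intro split_PiM prob_Mi) auto
  also have "(\<integral>\<^sup>+p. H p \<partial>(PiM A Mi \<Otimes>\<^sub>M PiM B Mi)) = (\<integral>\<^sup>+y. \<integral>\<^sup>+z. H (y, z) \<partial>PiM B Mi \<partial>PiM A Mi)"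
    by (rule PB.nn_integral_fst[symmetric]) measurable
  also have "\<dots> = (\<integral>\<^sup>+y. G (\<lambda>k. y (Suc j, k)) \<partial>PiM A Mi)"
  proof (intro nn_integral_cong)
    fix y :: "nat \<times> nat \<Rightarrow> real"
    show "(\<integral>\<^sup>+z. H (y, z) \<partial>PiM B Mi) = G (\<lambda>k. y (Suc j, k))"
    proof (cases "num_events (lift (\<lambda>k. y (Suc j, k))) 0 t = 0")
      case True
      then show ?thesis by (simp add: H_def G_def PB.emeasure_space_1)
    next
      case False
      let ?s = "L y"
      have [measurable]: "(\<lambda>z. age x0 z j ?s) \<in> borel_measurable (PiM B Mi)"
        by (rule age_meas) (auto intro!: PiM_coord simp: B_def)
      have "(\<integral>\<^sup>+z. H (y, z) \<partial>PiM B Mi) = (\<integral>\<^sup>+z. F (age x0 z j ?s + (t - ?s)) \<partial>PiM B Mi)"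
        using False by (simp add: H_def)
      also have "\<dots> = (\<integral>\<^sup>+z. F (age x0 z j ?s + (t - ?s)) \<partial>distr P (PiM B Mi) (\<lambda>\<omega>. restrict \<omega> B))"
        using restrP[OF AB(2)] by simp
      also have "\<dots> = (\<integral>\<^sup>+\<omega>. F (age x0 (restrict \<omega> B) j ?s + (t - ?s)) \<partial>P)"
        by (rule nn_integral_distr) (use AB in \<open>auto simp: P_def intro!: measurable_restrict_subset\<close>)
      also have "\<dots> = (\<integral>\<^sup>+\<omega>. F (age x0 \<omega> j ?s + (t - ?s)) \<partial>P)"
        by (intro nn_integral_cong arg_cong[where f=F] arg_cong2[where f="(+)"] refl age_local)
           (auto simp: B_def)
      also have "\<dots> = hh (t - ?s)" by (simp add: hh_def)
      finally show ?thesis using False by (simp add: G_def L_def)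
    qed
  qed
  also have "\<dots> = (\<integral>\<^sup>+x. G x \<partial>distr (PiM A Mi) E.S (\<lambda>y k. y (Suc j, k)))"
  proof (rule nn_integral_distr[symmetric])
    have "(\<lambda>y k. y (Suc j, k)) \<in> measurable (PiM A Mi) (PiM UNIV (\<lambda>_. borel))"
      by (intro measurable_PiM_single' PiM_coord) (auto simp: A_def)
    moreover have "sets (PiM UNIV (\<lambda>_::nat. borel)) = sets E.S" by (intro sets_PiM_cong) auto
    ultimately show "(\<lambda>y k. y (Suc j, k)) \<in> measurable (PiM A Mi) E.S" using measurable_cong_sets by fastforce
  qed measurable
  also have "distr (PiM A Mi) E.S (\<lambda>y k. y (Suc j, k)) = E.S"
  proof -
    have "prob_space E.Mx" by (rule E.prob_Mx)
    then show ?thesis using seq_distr[of A Mi "Suc j"] AB prob_Mi j by (auto simp: A_def)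
  qed
  also have "(\<integral>\<^sup>+x. G x \<partial>E.S) = ennreal (exp (- \<mu> (Suc j) * t)) * F (x0 (Suc j) + t)
    + (\<integral>\<^sup>+a. ennreal (indicator {..t} a * erlang_density 0 (\<mu> (Suc j)) a) * hh a \<partial>lborel)"
    unfolding G_def by (rule E.renewal[OF t]) auto
  finally show ?thesis by (simp add: hh_def)
qed

end


lemma exp_poly_lim:
  fixes \<mu> c :: real assumes "0 < \<mu>"
  shows "((\<lambda>t. exp (- \<mu> * t) * (c + t) ^ m) \<longlongrightarrow> 0) at_top"
  using assms by real_asymp

lemma bdd_from_lim:
  fixes f :: "real \<Rightarrow> real"
  assumes lim: "(f \<longlongrightarrow> D) at_top" and b: "\<And>s. 0 \<le> s \<Longrightarrow> \<bar>f s\<bar> \<le> (s + C) ^ k" and C: "0 \<le> C"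
  shows "\<exists>B. \<forall>s\<ge>0. \<bar>f s\<bar> \<le> B"
proof -
  have "\<forall>\<^sub>F s in at_top. dist (f s) D < 1" using lim by (rule tendstoD) simp
  then obtain T where T: "\<And>s. s \<ge> T \<Longrightarrow> dist (f s) D < 1" by (auto simp: eventually_at_top_linorder)
  show ?thesis
  proof (intro exI allI impI)
    fix s :: real assume s: "0 \<le> s"
    show "\<bar>f s\<bar> \<le> max (\<bar>D\<bar> + 1) ((\<bar>T\<bar> + C) ^ k)"
    proof (cases "s \<ge> T")
      case True
      then show ?thesis using T[OF True] by (auto simp: dist_real_def)
    next
      case False
      have "\<bar>f s\<bar> \<le> (s + C) ^ k" by (rule b[OF s])
      also have "\<dots> \<le> (\<bar>T\<bar> + C) ^ k" using False s C by (intro power_mono) auto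
      finally show ?thesis by simp
    qed
  qed
qed

context line
begin

definition mom :: "nat \<Rightarrow> nat \<Rightarrow> real \<Rightarrow> real" where
  "mom j k t = (\<integral>\<omega>. age x0 \<omega> j t ^ k \<partial>P)"

abbreviation "Cx j \<equiv> (\<Sum>i\<le>j. x0 i)"

lemma Cx_nn: "j < n \<Longrightarrow> 0 \<le> Cx j"
  by (intro sum_nonneg x0nn) auto

lemma age_meas_P[measurable]: "j < n \<Longrightarrow> (\<lambda>\<omega>. age x0 \<omega> j t) \<in> borel_measurable P"
  by (rule age_meas) auto

lemma age_meas_pair: "j < n \<Longrightarrow> (\<lambda>p. age x0 (snd p) j (fst p)) \<in> borel_measurable (borel \<Otimes>\<^sub>M P)"
proof (rule age_meas)
  fix l k assume "j < n" "l \<le> j"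
  then have [measurable]: "(\<lambda>\<omega>. \<omega> (l, k)) \<in> borel_measurable P" by (intro coord_meas) auto
  show "(\<lambda>z. snd z (l, k)) \<in> borel_measurable (borel \<Otimes>\<^sub>M P)" by measurable
qed measurable

lemma AE_age:
  assumes "j < n" "0 \<le> t"
  shows "AE \<omega> in P. 0 \<le> age x0 \<omega> j t \<and> age x0 \<omega> j t \<le> t + Cx j"
  using AE_P_nonneg
proof eventually_elim
  case (elim \<omega>)
  show ?case by (rule age_bounds) (use elim assms in \<open>auto intro: x0nn\<close>)
qed

lemma integrable_age:
  assumes "j < n" "0 \<le> t" "0 \<le> a"
  shows "integrable P (\<lambda>\<omega>. (age x0 \<omega> j t + a) ^ k)"
proof (rule P.integrable_const_bound[where B="(t + Cx j + a) ^ k"])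
  show "AE \<omega> in P. norm ((age x0 \<omega> j t + a) ^ k) \<le> (t + Cx j + a) ^ k"
    using AE_age[OF assms(1,2)]
  proof eventually_elim
    case (elim \<omega>)
    then show ?case using assms by (auto simp: power_abs intro!: power_mono)
  qed
qed (use assms in measurable)

lemma integrable_age0:
  assumes "j < n" "0 \<le> t"
  shows "integrable P (\<lambda>\<omega>. age x0 \<omega> j t ^ k)"
  using integrable_age[OF assms order_refl, of k] by simp

lemma mom_bounds:
  assumes "j < n" "0 \<le> t"
  shows "0 \<le> mom j k t" "mom j k t \<le> (t + Cx j) ^ k"
proof -
  show "0 \<le> mom j k t" unfolding mom_def
    using AE_age[OF assms] by (intro integral_nonneg_AE) (auto elim: eventually_mono)
  have "AE \<omega> in P. age x0 \<omega> j t ^ k \<le> (t + Cx j) ^ k"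
    using AE_age[OF assms] by eventually_elim (auto intro: power_mono)
  then have "mom j k t \<le> (\<integral>\<omega>. (t + Cx j) ^ k \<partial>P)" unfolding mom_def
    by (intro integral_mono_AE integrable_age0[OF assms]) auto
  also have "\<dots> = (t + Cx j) ^ k" by (simp add: P.prob_space)
  finally show "mom j k t \<le> (t + Cx j) ^ k" .
qed

lemma mom_abs_bound: "j < n \<Longrightarrow> 0 \<le> t \<Longrightarrow> \<bar>mom j k t\<bar> \<le> (t + Cx j) ^ k"
  using mom_bounds[of j t k] by simp

lemma mom_meas[measurable]: "j < n \<Longrightarrow> mom j k \<in> borel_measurable borel"
proof -
  assume j: "j < n"
  have [measurable]: "(\<lambda>p. age x0 (snd p) j (fst p)) \<in> borel_measurable (borel \<Otimes>\<^sub>M P)"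
    by (rule age_meas_pair[OF j])
  have "(\<lambda>(t, \<omega>). age x0 \<omega> j t ^ k) \<in> borel_measurable (borel \<Otimes>\<^sub>M P)"
    by (simp add: case_prod_beta') measurable
  then show ?thesis unfolding mom_def[abs_def] by measurable
qed

lemma binom_moment:
  assumes j: "j < n" and s: "0 \<le> s" and a: "0 \<le> a"
  shows "(\<integral>\<^sup>+\<omega>. ennreal ((age x0 \<omega> j s + a) ^ m) \<partial>P) = ennreal (\<Sum>k\<le>m. of_nat (m choose k) * a ^ (m - k) * mom j k s)"
proof -
  have "(\<integral>\<^sup>+\<omega>. ennreal ((age x0 \<omega> j s + a) ^ m) \<partial>P) = ennreal (\<integral>\<omega>. (age x0 \<omega> j s + a) ^ m \<partial>P)"
    using AE_age[OF j s] a
    by (intro nn_integral_eq_integral integrable_age[OF j s a]) (auto elim!: eventually_mono)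
  also have "(\<integral>\<omega>. (age x0 \<omega> j s + a) ^ m \<partial>P) = (\<integral>\<omega>. (\<Sum>k\<le>m. of_nat (m choose k) * a ^ (m - k) * age x0 \<omega> j s ^ k) \<partial>P)"
    by (intro Bochner_Integration.integral_cong refl) (simp add: binomial_ring mult_ac)
  also have "\<dots> = (\<Sum>k\<le>m. \<integral>\<omega>. of_nat (m choose k) * a ^ (m - k) * age x0 \<omega> j s ^ k \<partial>P)"
    by (rule Bochner_Integration.integral_sum) (use integrable_age0[OF j s] in auto)
  also have "\<dots> = (\<Sum>k\<le>m. of_nat (m choose k) * a ^ (m - k) * mom j k s)"
    by (simp add: mom_def)
  finally show ?thesis .
qed

end


lemma ennreal_eq_combine:
  assumes "ennreal X = ennreal A * ennreal B + ennreal C" "0 \<le> X" "0 \<le> A" "0 \<le> B" "0 \<le> C"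
  shows "X = A * B + C"
proof -
  have "ennreal X = ennreal (A * B + C)" using assms by (simp add: ennreal_mult ennreal_plus)
  then show ?thesis using assms by (subst (asm) ennreal_inj) auto
qed

context line
begin

lemma mom_nn: "j < n \<Longrightarrow> 0 \<le> t \<Longrightarrow> ennreal (mom j m t) = (\<integral>\<^sup>+\<omega>. ennreal (age x0 \<omega> j t ^ m) \<partial>P)"
  unfolding mom_def
  by (rule nn_integral_eq_integral[symmetric, OF integrable_age0])
     (auto dest!: AE_age elim!: eventually_mono)

lemma rec_base:
  assumes n: "0 < n" and t: "0 \<le> t"
  shows "mom 0 m t = exp (- \<mu> 0 * t) * (x0 0 + t) ^ m +
    (\<integral>a. indicator {..t} a * (erlang_density 0 (\<mu> 0) a * a ^ m) * 1 \<partial>lborel)"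
proof (rule ennreal_eq_combine)
  have \<mu>0: "0 < \<mu> 0" using \<mu>pos[OF n] .
  have int: "integrable lborel (\<lambda>a. indicator {..t} a * (erlang_density 0 (\<mu> 0) a * a ^ m) * 1)"
    by (rule conv_integrable[OF \<mu>0, where B=1]) auto
  have nn: "0 \<le> indicator {..t} a * (erlang_density 0 (\<mu> 0) a * a ^ m) * 1" for a :: real
    using wgt_nn[OF \<mu>0, of a m] by auto
  have "ennreal (mom 0 m t) = (\<integral>\<^sup>+\<omega>. ennreal (age x0 \<omega> 0 t ^ m) \<partial>P)" by (rule mom_nn[OF n t])
  also have "\<dots> = ennreal (exp (- \<mu> 0 * t)) * ennreal ((x0 0 + t) ^ m)
    + (\<integral>\<^sup>+a. ennreal (indicator {..t} a * erlang_density 0 (\<mu> 0) a) * ennreal (a ^ m) \<partial>lborel)"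
    by (rule step0[OF n t]) measurable
  also have "(\<integral>\<^sup>+a. ennreal (indicator {..t} a * erlang_density 0 (\<mu> 0) a) * ennreal (a ^ m) \<partial>lborel)
      = (\<integral>\<^sup>+a. ennreal (indicator {..t} a * (erlang_density 0 (\<mu> 0) a * a ^ m) * 1) \<partial>lborel)"
  proof (intro nn_integral_cong)
    fix a :: real
    show "ennreal (indicator {..t} a * erlang_density 0 (\<mu> 0) a) * ennreal (a ^ m) =
      ennreal (indicator {..t} a * (erlang_density 0 (\<mu> 0) a * a ^ m) * 1)"
    proof (cases "0 \<le> a")
      case True
      then show ?thesis using \<mu>0 by (simp add: ennreal_mult[symmetric] mult_ac)
    next
      case False
      then show ?thesis by (simp add: erlang_density_def)
    qed
  qed
  also have "\<dots> = ennreal (\<integral>a. indicator {..t} a * (erlang_density 0 (\<mu> 0) a * a ^ m) * 1 \<partial>lborel)"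
    by (rule nn_integral_eq_integral[OF int]) (use nn in auto)
  finally show "ennreal (mom 0 m t) = ennreal (exp (- \<mu> 0 * t)) * ennreal ((x0 0 + t) ^ m)
    + ennreal (\<integral>a. indicator {..t} a * (erlang_density 0 (\<mu> 0) a * a ^ m) * 1 \<partial>lborel)" .
  show "0 \<le> mom 0 m t" using mom_bounds[OF n t] by simp
  show "0 \<le> exp (- \<mu> 0 * t)" by simp
  show "0 \<le> (x0 0 + t) ^ m" using x0nn[OF n] t by simp
  show "0 \<le> (\<integral>a. indicator {..t} a * (erlang_density 0 (\<mu> 0) a * a ^ m) * 1 \<partial>lborel)"
    by (rule integral_nonneg_AE) (use nn in auto)
qed

lemma rec_Suc:
  assumes j: "Suc j < n" and t: "0 \<le> t" and B: "\<And>k. \<exists>B. \<forall>s\<ge>0. \<bar>mom j k s\<bar> \<le> B"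
  shows "mom (Suc j) m t = exp (- \<mu> (Suc j) * t) * (x0 (Suc j) + t) ^ m +
    (\<Sum>k\<le>m. of_nat (m choose k) *
       (\<integral>a. indicator {..t} a * (erlang_density 0 (\<mu> (Suc j)) a * a ^ (m - k)) * mom j k (t - a) \<partial>lborel))"
proof -
  let ?\<mu> = "\<mu> (Suc j)"
  have \<mu>0: "0 < ?\<mu>" using \<mu>pos[OF j] .
  have jn: "j < n" using j by simp
  define g where "g a = (\<Sum>k\<le>m. of_nat (m choose k) *
       (indicator {..t} a * (erlang_density 0 ?\<mu> a * a ^ (m - k)) * mom j k (t - a)))" for a
  have intk: "integrable lborel (\<lambda>a. indicator {..t} a * (erlang_density 0 ?\<mu> a * a ^ (m - k)) * mom j k (t - a))" for k
  proof -
    obtain Bk where "\<forall>s\<ge>0. \<bar>mom j k s\<bar> \<le> Bk" using B by blast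
    then show ?thesis by (intro conv_integrable[OF \<mu>0, where B=Bk]) (auto intro: mom_meas[OF jn])
  qed
  have int: "integrable lborel g" unfolding g_def using intk by auto
  have gnn: "0 \<le> g a" for a
  proof (cases "0 \<le> a \<and> a \<le> t")
    case True
    then show ?thesis unfolding g_def using mom_bounds[OF jn, of "t - a"] \<mu>0
      by (intro sum_nonneg mult_nonneg_nonneg) (auto simp: erlang_density_def)
  next
    case False
    then show ?thesis by (auto simp: g_def erlang_density_def)
  qed
  have "ennreal (mom (Suc j) m t) = (\<integral>\<^sup>+\<omega>. ennreal (age x0 \<omega> (Suc j) t ^ m) \<partial>P)" by (rule mom_nn[OF j t])
  also have "\<dots> = ennreal (exp (- ?\<mu> * t)) * ennreal ((x0 (Suc j) + t) ^ m)
    + (\<integral>\<^sup>+a. ennreal (indicator {..t} a * erlang_density 0 ?\<mu> a) *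
         (\<integral>\<^sup>+\<omega>. ennreal ((age x0 \<omega> j (t - a) + a) ^ m) \<partial>P) \<partial>lborel)"
    by (rule stepSuc[OF j t]) measurable
  also have "(\<integral>\<^sup>+a. ennreal (indicator {..t} a * erlang_density 0 ?\<mu> a) *
         (\<integral>\<^sup>+\<omega>. ennreal ((age x0 \<omega> j (t - a) + a) ^ m) \<partial>P) \<partial>lborel) = (\<integral>\<^sup>+a. ennreal (g a) \<partial>lborel)"
  proof (intro nn_integral_cong)
    fix a :: real
    show "ennreal (indicator {..t} a * erlang_density 0 ?\<mu> a) *
         (\<integral>\<^sup>+\<omega>. ennreal ((age x0 \<omega> j (t - a) + a) ^ m) \<partial>P) = ennreal (g a)"
    proof (cases "0 \<le> a \<and> a \<le> t")
      case True
      have s: "0 \<le> (\<Sum>k\<le>m. of_nat (m choose k) * a ^ (m - k) * mom j k (t - a))"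
        using True mom_bounds[OF jn, of "t - a"] by (intro sum_nonneg mult_nonneg_nonneg) auto
      have e: "0 \<le> indicator {..t} a * erlang_density 0 ?\<mu> a"
        using \<mu>0 by (auto simp: erlang_density_def)
      have "g a = indicator {..t} a * erlang_density 0 ?\<mu> a * (\<Sum>k\<le>m. of_nat (m choose k) * a ^ (m - k) * mom j k (t - a))"
        unfolding g_def by (simp add: sum_distrib_left mult_ac)
      then show ?thesis using True s e
        by (simp add: binom_moment[OF jn] ennreal_mult[symmetric])
    next
      case False
      then have "g a = 0" by (auto simp: g_def erlang_density_def)
      then show ?thesis using False by (auto simp: erlang_density_def)
    qed
  qed
  also have "\<dots> = ennreal (integral\<^sup>L lborel g)"
    by (rule nn_integral_eq_integral[OF int]) (use gnn in auto)
  finally have *: "ennreal (mom (Suc j) m t) = ennreal (exp (- ?\<mu> * t)) * ennreal ((x0 (Suc j) + t) ^ m)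
    + ennreal (integral\<^sup>L lborel g)" .
  have "mom (Suc j) m t = exp (- ?\<mu> * t) * (x0 (Suc j) + t) ^ m + integral\<^sup>L lborel g"
    by (rule ennreal_eq_combine[OF *])
       (use mom_bounds[OF j t] x0nn[OF j] t gnn in \<open>auto intro: integral_nonneg_AE\<close>)
  also have "integral\<^sup>L lborel g = (\<Sum>k\<le>m. of_nat (m choose k) *
       (\<integral>a. indicator {..t} a * (erlang_density 0 ?\<mu> a * a ^ (m - k)) * mom j k (t - a) \<partial>lborel))"
    unfolding g_def using intk by (subst Bochner_Integration.integral_sum) auto
  finally show ?thesis .
qed

end


lemma alg_identity:
  fixes c :: "nat \<Rightarrow> real"
  shows "(\<Sum>k\<le>m. of_nat (m choose k) * ((fact k * c k) * (fact (m - k) / \<mu> ^ (m - k)))) =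
    fact m * (\<Sum>k\<le>m. (1 / \<mu>) ^ (m - k) * c k)"
proof -
  have "of_nat (m choose k) * ((fact k * c k) * (fact (m - k) / \<mu> ^ (m - k))) = fact m * ((1 / \<mu>) ^ (m - k) * c k)"
    if "k \<le> m" for k
  proof -
    have "real (fact k * fact (m - k) * (m choose k)) = real (fact m)"
      using binomial_fact_lemma[OF that] by simp
    then have "fact k * fact (m - k) * real (m choose k) = (fact m :: real)"
      by (simp only: of_nat_mult of_nat_fact)
    then show ?thesis by (simp add: power_one_over field_simps)
  qed
  then show ?thesis by (simp add: sum_distrib_left)
qed

context line
begin

lemma mom_lim: "j < n \<Longrightarrow> (mom j k \<longlongrightarrow> fact k * colsum \<mu> n k j) at_top"
proof (induction j arbitrary: k)
  case 0
  have \<mu>0: "0 < \<mu> 0" using \<mu>pos[OF 0] .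
  have "((\<lambda>t. exp (- \<mu> 0 * t) * (x0 0 + t) ^ k +
    (\<integral>a. indicator {..t} a * (erlang_density 0 (\<mu> 0) a * a ^ k) * 1 \<partial>lborel)) \<longlongrightarrow> 0 + 1 * (fact k / \<mu> 0 ^ k)) at_top"
    by (intro tendsto_add exp_poly_lim[OF \<mu>0] conv_limit[OF \<mu>0, where B=1]) auto
  moreover have "0 + 1 * (fact k / \<mu> 0 ^ k) = fact k * colsum \<mu> n k 0"
    using 0 by (simp add: colsum_base power_one_over)
  ultimately have "((\<lambda>t. exp (- \<mu> 0 * t) * (x0 0 + t) ^ k +
    (\<integral>a. indicator {..t} a * (erlang_density 0 (\<mu> 0) a * a ^ k) * 1 \<partial>lborel)) \<longlongrightarrow> fact k * colsum \<mu> n k 0) at_top"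
    by simp
  then show ?case
    by (rule Lim_transform_eventually)
       (use eventually_ge_at_top[of 0] in \<open>eventually_elim, simp add: rec_base[OF 0]\<close>)
next
  case (Suc j)
  let ?\<mu> = "\<mu> (Suc j)"
  have \<mu>0: "0 < ?\<mu>" using \<mu>pos[OF Suc.prems] .
  have jn: "j < n" using Suc.prems by simp
  have IH: "(mom j k \<longlongrightarrow> fact k * colsum \<mu> n k j) at_top" for k by (rule Suc.IH[OF jn])
  have B: "\<exists>B. \<forall>s\<ge>0. \<bar>mom j k s\<bar> \<le> B" for k
    by (rule bdd_from_lim[OF IH mom_abs_bound[OF jn] Cx_nn[OF jn]])
  have "((\<lambda>t. exp (- ?\<mu> * t) * (x0 (Suc j) + t) ^ k +
    (\<Sum>i\<le>k. of_nat (k choose i) *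
       (\<integral>a. indicator {..t} a * (erlang_density 0 ?\<mu> a * a ^ (k - i)) * mom j i (t - a) \<partial>lborel)))
    \<longlongrightarrow> 0 + (\<Sum>i\<le>k. of_nat (k choose i) * ((fact i * colsum \<mu> n i j) * (fact (k - i) / ?\<mu> ^ (k - i))))) at_top"
  proof (intro tendsto_add exp_poly_lim[OF \<mu>0] tendsto_sum tendsto_mult tendsto_const)
    fix i
    obtain Bi where "\<forall>s\<ge>0. \<bar>mom j i s\<bar> \<le> Bi" using B by blast
    then show "((\<lambda>t. \<integral>a. indicator {..t} a * (erlang_density 0 ?\<mu> a * a ^ (k - i)) * mom j i (t - a) \<partial>lborel)
      \<longlongrightarrow> (fact i * colsum \<mu> n i j) * (fact (k - i) / ?\<mu> ^ (k - i))) at_top"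
      by (intro conv_limit[OF \<mu>0, where B=Bi] IH mom_meas[OF jn]) auto
  qed
  also have "0 + (\<Sum>i\<le>k. of_nat (k choose i) * ((fact i * colsum \<mu> n i j) * (fact (k - i) / ?\<mu> ^ (k - i))))
     = fact k * colsum \<mu> n k (Suc j)"
    by (simp only: add_0_left colsum_rec[OF Suc.prems] alg_identity)
  finally show ?case
    by (rule Lim_transform_eventually)
       (use eventually_ge_at_top[of 0] in \<open>eventually_elim, simp add: rec_Suc[OF Suc.prems _ B]\<close>)
qed

end

theorem theorem4:
  fixes n m :: nat and \<mu> x0 :: "nat \<Rightarrow> real"
  assumes "\<forall>l<n. \<mu> l > 0" and "\<forall>j<n. x0 j \<ge> 0" and "m \<ge> 1"
  shows "\<forall>j<n. (\<forall>t\<ge>0. integrable (line_space \<mu> n) (\<lambda>\<omega>. age x0 \<omega> j t ^ m)) \<and>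
           ((\<lambda>t. \<integral>\<omega>. age x0 \<omega> j t ^ m \<partial>line_space \<mu> n)
              \<longlongrightarrow> fact m * (\<Sum>i<n. mat_pow n (Umat \<mu> n) m i j)) at_top"
proof -
  interpret line \<mu> n x0 using assms by unfold_locales auto
  show ?thesis
  proof (intro allI impI conjI)
    fix j assume j: "j < n"
    show "integrable (line_space \<mu> n) (\<lambda>\<omega>. age x0 \<omega> j t ^ m)" if "0 \<le> t" for t
      using integrable_age0[OF j that] by blast
    show "((\<lambda>t. \<integral>\<omega>. age x0 \<omega> j t ^ m \<partial>line_space \<mu> n)
              \<longlongrightarrow> fact m * (\<Sum>i<n. mat_pow n (Umat \<mu> n) m i j)) at_top"
      using mom_lim[OF j, of m] unfolding mom_def[abs_def] colsum_def by simp
  qed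
qed


end
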